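(* For every finite linear order $Y$, $\mathsf{rk}(Y)=\lfloor\log_2(|Y|+1)\rfloor$. In particular, for $n\in\omega$, $\mathsf{rk}(Y)\ge n$ if and only if $|Y|\ge 2^n-1$.
   Context: Let $\mathcal F$ be the class of finite linear orders (language $\{<\}$); substructures are suborders and $\mathsf{age}(X)$ is the set of finite suborders of a linear order $X$. For $A\le B$, $B$ is a prime extension of $A$ if $|B\setminus A|=1$; a realization of $B$ in $X$ (where $A\le X$) is $C\le X$ with $A\le C$ and an order-isomorphism $B\to C$ fixing $A$ pointwise. For $F\in\mathsf{age}(X)$ define by recursion: $\mathsf{rk}_X(F)\ge0$ always; $\mathsf{rk}_X(F)\ge\alpha+1$ iff every prime extension $B\in\mathcal F$ of $F$ has a realization $C$ in $X$ with $\mathsf{rk}_X(C)\ge\alpha$; for limit $\alpha$, $\mathsf{rk}_X(F)\ge\alpha$ iff $\mathsf{rk}_X(F)\ge\beta$ for all $\beta<\alpha$. $\mathsf{rk}_X(F)=\sup\{\alpha:\mathsf{rk}_X(F)\ge\alpha\}$ (or $\infty$ if this holds for all ordinals), and $\mathsf{rk}(X)=\mathsf{rk}_X(\emptyset)$. *)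

theory Defs
  imports Complex_Main
begin

text \<open>A linear order X is modelled as a set of elements of a linearly ordered type,
  with the induced order; suborders are subsets.  A prime extension B of a finite
  suborder F is, up to isomorphism over F, a strict linear order R on the carrier
  (Some ` F) \<union> {None} (the new point being None) which restricts to the order of F.\<close>

definition ext_carrier :: "'a set \<Rightarrow> 'a option set" where
  "ext_carrier F = insert None (Some ` F)"

definition prime_ext :: "'a::linorder set \<Rightarrow> ('a option \<Rightarrow> 'a option \<Rightarrow> bool) \<Rightarrow> bool" where
  "prime_ext F R \<longleftrightarrow>
     (\<forall>u\<in>ext_carrier F. \<not> R u u) \<and>
     (\<forall>u\<in>ext_carrier F. \<forall>v\<in>ext_carrier F. \<forall>w\<in>ext_carrier F. R u v \<longrightarrow> R v w \<longrightarrow> R u w) \<and>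
     (\<forall>u\<in>ext_carrier F. \<forall>v\<in>ext_carrier F. u \<noteq> v \<longrightarrow> R u v \<or> R v u) \<and>
     (\<forall>x\<in>F. \<forall>y\<in>F. R (Some x) (Some y) \<longleftrightarrow> x < y)"

definition realizes :: "'a::linorder set \<Rightarrow> 'a set \<Rightarrow> ('a option \<Rightarrow> 'a option \<Rightarrow> bool) \<Rightarrow> 'a set \<Rightarrow> bool" where
  "realizes X F R C \<longleftrightarrow> F \<subseteq> C \<and> C \<subseteq> X \<and>
     (\<exists>h. bij_betw h (ext_carrier F) C \<and>
          (\<forall>u\<in>ext_carrier F. \<forall>v\<in>ext_carrier F. R u v \<longleftrightarrow> h u < h v) \<and>
          (\<forall>x\<in>F. h (Some x) = x))"

text \<open>rk_ge X F n  means  rk_X(F) \<ge> n  (finite stages of the rank recursion).\<close>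
fun rk_ge :: "'a::linorder set \<Rightarrow> 'a set \<Rightarrow> nat \<Rightarrow> bool" where
  "rk_ge X F 0 = True"
| "rk_ge X F (Suc n) = (\<forall>R. prime_ext F R \<longrightarrow> (\<exists>C. realizes X F R C \<and> rk_ge X C n))"

end

theory Submission
  imports Defs
begin


definition downcut :: "'a::linorder set \<Rightarrow> 'a set \<Rightarrow> bool" where
  "downcut F L \<longleftrightarrow> L \<subseteq> F \<and> (\<forall>x\<in>L. \<forall>y\<in>F. y < x \<longrightarrow> y \<in> L)"

definition gap :: "'a::linorder set \<Rightarrow> 'a set \<Rightarrow> 'a set \<Rightarrow> 'a set" where
  "gap X F L = {y\<in>X. (\<forall>x\<in>L. x < y) \<and> (\<forall>x\<in>F-L. y < x)}"

definition Rcut :: "'a::linorder set \<Rightarrow> 'a option \<Rightarrow> 'a option \<Rightarrow> bool" where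
  "Rcut L u v = (case u of None \<Rightarrow> (case v of None \<Rightarrow> False | Some y \<Rightarrow> y \<notin> L)
                 | Some x \<Rightarrow> (case v of None \<Rightarrow> x \<in> L | Some y \<Rightarrow> x < y))"


lemma logpart: "(n::nat) \<le> nat \<lfloor>log 2 (real (m::nat) + 1)\<rfloor> \<longleftrightarrow> 2^n \<le> m + 1"
proof -
  have "n \<le> nat \<lfloor>log 2 (real m + 1)\<rfloor> \<longleftrightarrow> int n \<le> \<lfloor>log 2 (real m + 1)\<rfloor>"
    by (simp add: le_nat_iff)
  also have "\<dots> \<longleftrightarrow> real n \<le> log 2 (real m + 1)"
    by (simp add: le_floor_iff)
  also have "\<dots> \<longleftrightarrow> 2 powr real n \<le> real m + 1" by (subst le_log_iff) auto
  also have "2 powr real n = real (2^n)" by (simp add: powr_realpow)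
  also have "real (2^n) \<le> real m + 1 \<longleftrightarrow> 2^n \<le> m + 1"
    by (metis of_nat_1 of_nat_add of_nat_le_iff)
  finally show ?thesis .
qed


lemma realizes_elim:
  assumes "realizes X F R C"
  shows "\<exists>c. c \<in> X \<and> c \<notin> F \<and> C = insert c F \<and> (\<forall>x\<in>F. R (Some x) None \<longleftrightarrow> x < c)
             \<and> (\<forall>x\<in>F. R None (Some x) \<longleftrightarrow> c < x)"
proof -
  obtain h where h: "bij_betw h (ext_carrier F) C"
    "\<forall>u\<in>ext_carrier F. \<forall>v\<in>ext_carrier F. R u v \<longleftrightarrow> h u < h v" "\<forall>x\<in>F. h (Some x) = x"
    and sub: "C \<subseteq> X" using assms unfolding realizes_def by blast
  define c where "c = h None"
  have img: "C = h ` ext_carrier F" using h(1) by (simp add: bij_betw_def)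
  have "h ` ext_carrier F = insert c F" using h(3) unfolding ext_carrier_def c_def
    by (auto simp: image_iff)
  hence C: "C = insert c F" using img by simp
  have cF: "c \<notin> F"
  proof
    assume "c \<in> F"
    hence "h None = h (Some c)" using h(3) c_def by simp
    moreover have "None \<in> ext_carrier F" "Some c \<in> ext_carrier F" using \<open>c \<in> F\<close>
      by (auto simp: ext_carrier_def)
    ultimately have "None = Some c" using h(1) unfolding bij_betw_def inj_on_def by blast
    thus False by simp
  qed
  have "c \<in> X" using C sub by auto
  moreover have "\<forall>x\<in>F. R (Some x) None \<longleftrightarrow> x < c" using h(2,3) c_def
    by (auto simp: ext_carrier_def)
  moreover have "\<forall>x\<in>F. R None (Some x) \<longleftrightarrow> c < x" using h(2,3) c_def
    by (auto simp: ext_carrier_def)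
  ultimately show ?thesis using C cF by blast
qed


lemma Rcut_prime:
  assumes "downcut F L"
  shows "prime_ext F (Rcut L)"
proof -
  have d: "L \<subseteq> F" "\<And>x y. x \<in> L \<Longrightarrow> y \<in> F \<Longrightarrow> y < x \<Longrightarrow> y \<in> L"
    using assms unfolding downcut_def by auto
  have lt: "x < z" if "x \<in> L" "z \<in> F" "z \<notin> L" for x z
  proof (rule ccontr)
    assume "\<not> x < z"
    hence "z < x \<or> z = x" by auto
    thus False using d that by auto
  qed
  have irr: "\<forall>u\<in>ext_carrier F. \<not> Rcut L u u"
    by (auto simp: Rcut_def split: option.splits)
  have mem: "x \<in> F" if "Some x \<in> ext_carrier F" for x
    using that by (auto simp: ext_carrier_def)
  have tr: "Rcut L u w" if u: "u\<in>ext_carrier F" and v: "v\<in>ext_carrier F" and w: "w\<in>ext_carrier F"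
     and uv: "Rcut L u v" and vw: "Rcut L v w" for u v w
  proof (cases u)
    case None
    show ?thesis
    proof (cases v)
      case None
      thus ?thesis using uv \<open>u = None\<close> by (simp add: Rcut_def)
    next
      case (Some y)
      show ?thesis
      proof (cases w)
        case None
        thus ?thesis using uv vw \<open>u = None\<close> Some by (simp add: Rcut_def)
      next
        case (Some z)
        have "y \<notin> L" "y < z" using uv vw \<open>u = None\<close> \<open>v = Some y\<close> Some by (simp_all add: Rcut_def)
        moreover have "z \<in> F" using w Some mem by simp
        moreover have "y \<in> F" using v \<open>v = Some y\<close> mem by simp
        ultimately have "z \<notin> L" using d(2) by blast
        thus ?thesis using \<open>u = None\<close> Some by (simp add: Rcut_def)
      qed
    qed
  next
    case (Some x)
    show ?thesis
    proof (cases v)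
      case None
      show ?thesis
      proof (cases w)
        case None
        thus ?thesis using vw \<open>v = None\<close> by (simp add: Rcut_def)
      next
        case (Some z)
        have "x \<in> L" "z \<notin> L" using uv vw \<open>u = Some x\<close> \<open>v = None\<close> Some by (simp_all add: Rcut_def)
        moreover have "z \<in> F" using w Some mem by simp
        ultimately have "x < z" using lt by blast
        thus ?thesis using \<open>u = Some x\<close> Some by (simp add: Rcut_def)
      qed
    next
      case (Some y)
      have xy: "x < y" using uv \<open>u = Some x\<close> Some by (simp add: Rcut_def)
      show ?thesis
      proof (cases w)
        case None
        have "y \<in> L" using vw None \<open>v = Some y\<close> by (simp add: Rcut_def)
        moreover have "x \<in> F" using u \<open>u = Some x\<close> mem by simp
        ultimately have "x \<in> L" using d(2) xy by blast
        thus ?thesis using \<open>u = Some x\<close> None by (simp add: Rcut_def)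
      next
        case (Some z)
        have "y < z" using vw \<open>v = Some y\<close> Some by (simp add: Rcut_def)
        thus ?thesis using xy \<open>u = Some x\<close> Some by (simp add: Rcut_def)
      qed
    qed
  qed
  have tot: "Rcut L u v \<or> Rcut L v u" if "u\<in>ext_carrier F" "v\<in>ext_carrier F" "u \<noteq> v" for u v
    using that unfolding ext_carrier_def Rcut_def
    by (cases u; cases v) auto
  show ?thesis unfolding prime_ext_def
  proof (intro conjI)
    show "\<forall>u\<in>ext_carrier F. \<forall>v\<in>ext_carrier F. \<forall>w\<in>ext_carrier F. Rcut L u v \<longrightarrow> Rcut L v w \<longrightarrow> Rcut L u w"
      using tr by blast
    show "\<forall>u\<in>ext_carrier F. \<forall>v\<in>ext_carrier F. u \<noteq> v \<longrightarrow> Rcut L u v \<or> Rcut L v u"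
      using tot by blast
    show "\<forall>x\<in>F. \<forall>y\<in>F. Rcut L (Some x) (Some y) \<longleftrightarrow> x < y" by (simp add: Rcut_def)
  qed (rule irr)
qed

lemma prime_cut:
  assumes "prime_ext F R"
  shows "downcut F {x\<in>F. R (Some x) None}"
    and "\<And>x. x \<in> F \<Longrightarrow> R None (Some x) \<longleftrightarrow> \<not> R (Some x) None"
proof -
  have irr: "\<And>u. u\<in>ext_carrier F \<Longrightarrow> \<not> R u u"
    and tr: "\<And>u v w. u\<in>ext_carrier F \<Longrightarrow> v\<in>ext_carrier F \<Longrightarrow> w\<in>ext_carrier F \<Longrightarrow> R u v \<Longrightarrow> R v w \<Longrightarrow> R u w"
    and tot: "\<And>u v. u\<in>ext_carrier F \<Longrightarrow> v\<in>ext_carrier F \<Longrightarrow> u \<noteq> v \<Longrightarrow> R u v \<or> R v u"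
    and ag: "\<And>x y. x\<in>F \<Longrightarrow> y\<in>F \<Longrightarrow> R (Some x) (Some y) \<longleftrightarrow> x < y"
  proof -
    note P = assms[unfolded prime_ext_def]
    show "\<And>u. u\<in>ext_carrier F \<Longrightarrow> \<not> R u u" using conjunct1[OF P] by blast
    show "\<And>u v w. u\<in>ext_carrier F \<Longrightarrow> v\<in>ext_carrier F \<Longrightarrow> w\<in>ext_carrier F \<Longrightarrow> R u v \<Longrightarrow> R v w \<Longrightarrow> R u w"
      using conjunct1[OF conjunct2[OF P]] by blast
    show "\<And>u v. u\<in>ext_carrier F \<Longrightarrow> v\<in>ext_carrier F \<Longrightarrow> u \<noteq> v \<Longrightarrow> R u v \<or> R v u"
      using conjunct1[OF conjunct2[OF conjunct2[OF P]]] by blast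
    show "\<And>x y. x\<in>F \<Longrightarrow> y\<in>F \<Longrightarrow> R (Some x) (Some y) \<longleftrightarrow> x < y"
      using conjunct2[OF conjunct2[OF conjunct2[OF P]]] by blast
  qed
  have N: "None \<in> ext_carrier F" and S: "\<And>x. x \<in> F \<Longrightarrow> Some x \<in> ext_carrier F"
    by (auto simp: ext_carrier_def)
  have "R (Some y) None" if "x \<in> F" "R (Some x) None" "y \<in> F" "y < x" for x y
  proof -
    have "R (Some y) (Some x)" using ag that by simp
    thus ?thesis using tr[OF S[OF that(3)] S[OF that(1)] N] that(2) by simp
  qed
  thus "downcut F {x\<in>F. R (Some x) None}"
    unfolding downcut_def by blast
  fix x assume x: "x \<in> F"
  show "R None (Some x) \<longleftrightarrow> \<not> R (Some x) None"
  proof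
    assume a: "R None (Some x)"
    show "\<not> R (Some x) None"
    proof
      assume "R (Some x) None"
      then have "R None None" using tr[OF N S[OF x] N] a by simp
      thus False using irr[OF N] by simp
    qed
  next
    assume "\<not> R (Some x) None"
    thus "R None (Some x)" using tot[OF N S[OF x]] by auto
  qed
qed

lemma realize_intro:
  assumes "prime_ext F R" "c \<in> X" "c \<notin> F" "F \<subseteq> X"
    "\<forall>x\<in>F. R (Some x) None \<longleftrightarrow> x < c" "\<forall>x\<in>F. R None (Some x) \<longleftrightarrow> c < x"
  shows "realizes X F R (insert c F)"
proof -
  define h where "h u = (case u of None \<Rightarrow> c | Some x \<Rightarrow> x)" for u
  have irr: "\<forall>u\<in>ext_carrier F. \<not> R u u"
    and ag: "\<forall>x\<in>F. \<forall>y\<in>F. R (Some x) (Some y) \<longleftrightarrow> x < y"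
    using assms(1) unfolding prime_ext_def by auto
  have "inj_on h (ext_carrier F)"
    unfolding inj_on_def ext_carrier_def h_def using assms(3) by auto
  moreover have "h ` ext_carrier F = insert c F"
    unfolding ext_carrier_def h_def by (auto simp: image_iff)
  ultimately have "bij_betw h (ext_carrier F) (insert c F)" by (simp add: bij_betw_def)
  moreover have "\<forall>u\<in>ext_carrier F. \<forall>v\<in>ext_carrier F. R u v \<longleftrightarrow> h u < h v"
    using irr ag assms(5,6) unfolding ext_carrier_def h_def by auto
  moreover have "\<forall>x\<in>F. h (Some x) = x" by (simp add: h_def)
  ultimately show ?thesis unfolding realizes_def using assms(2,4) by blast
qed


lemma median:
  fixes G :: "'a::linorder set"
  assumes "finite G" "2*k+1 \<le> card G"
  shows "\<exists>c\<in>G. k \<le> card {y\<in>G. y<c} \<and> k \<le> card {y\<in>G. c<y}"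
  using assms
proof (induction k arbitrary: G)
  case 0
  hence "G \<noteq> {}" by auto
  thus ?case by auto
next
  case (Suc k)
  hence ne: "G \<noteq> {}" by auto
  define a where "a = Min G"
  define b where "b = Max G"
  have aG: "a \<in> G" and bG: "b \<in> G" using ne Suc.prems by (auto simp: a_def b_def)
  have amin: "\<And>y. y \<in> G \<Longrightarrow> a \<le> y" using Suc.prems by (simp add: a_def)
  have bmax: "\<And>y. y \<in> G \<Longrightarrow> y \<le> b" using Suc.prems by (simp add: b_def)
  have "a \<noteq> b"
  proof
    assume "a = b"
    hence "G \<subseteq> {a}" using amin bmax by (auto intro: order.antisym)
    hence "card G \<le> card {a}" by (rule card_mono[rotated]) simp
    hence "card G \<le> 1" by simp
    thus False using Suc.prems by simp
  qed
  define G' where "G' = G - {a, b}"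
  have "card G' = card G - 2" unfolding G'_def using aG bG \<open>a \<noteq> b\<close> Suc.prems(1)
    by (simp add: card_Diff_subset)
  hence "2*k+1 \<le> card G'" using Suc.prems by simp
  moreover have "finite G'" using Suc.prems by (simp add: G'_def)
  ultimately obtain c where c: "c \<in> G'" "k \<le> card {y\<in>G'. y<c}" "k \<le> card {y\<in>G'. c<y}"
    using Suc.IH by blast
  have cG: "c \<in> G" and ac: "a < c" and cb: "c < b" using c(1) amin bmax unfolding G'_def
    by (auto simp: order.order_iff_strict)
  have "insert a {y\<in>G'. y<c} \<subseteq> {y\<in>G. y<c}" using aG ac G'_def by auto
  moreover have "a \<notin> {y\<in>G'. y<c}" by (simp add: G'_def)
  ultimately have 1: "Suc k \<le> card {y\<in>G. y<c}"
    using c(2) Suc.prems(1) card_mono[of "{y\<in>G. y<c}" "insert a {y\<in>G'. y<c}"]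
    by (simp add: \<open>finite G'\<close>)
  have "insert b {y\<in>G'. c<y} \<subseteq> {y\<in>G. c<y}" using bG cb G'_def by auto
  moreover have "b \<notin> {y\<in>G'. c<y}" by (simp add: G'_def)
  ultimately have 2: "Suc k \<le> card {y\<in>G. c<y}"
    using c(3) Suc.prems(1) card_mono[of "{y\<in>G. c<y}" "insert b {y\<in>G'. c<y}"]
    by (simp add: \<open>finite G'\<close>)
  show ?case using 1 2 cG by blast
qed




lemma gap_fin: "finite X \<Longrightarrow> finite (gap X A B)"
  unfolding gap_def by simp

lemma main:
  fixes X F :: "'a::linorder set"
  assumes fX: "finite X" and "F \<subseteq> X"
  shows "rk_ge X F n \<longleftrightarrow> (\<forall>L. downcut F L \<longrightarrow> 2^n - 1 \<le> card (gap X F L))"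
  using assms(2)
proof (induction n arbitrary: F)
  case 0
  show ?case by simp
next
  case (Suc n)
  let ?k = "2^n - 1 :: nat"
  have "(1::nat) \<le> 2^n" by simp
  hence k: "2^Suc n - 1 = 2*?k + 1" unfolding power_Suc by linarith
  show ?case
  proof
    assume rk: "rk_ge X F (Suc n)"
    show "\<forall>L. downcut F L \<longrightarrow> 2^Suc n - 1 \<le> card (gap X F L)"
    proof (intro allI impI)
      fix L assume dL: "downcut F L"
      obtain C where C: "realizes X F (Rcut L) C" "rk_ge X C n"
        using rk Rcut_prime[OF dL] by auto
      obtain c where c: "c\<in>X" "c\<notin>F" "C = insert c F"
        "\<forall>x\<in>F. Rcut L (Some x) None \<longleftrightarrow> x<c" "\<forall>x\<in>F. Rcut L None (Some x) \<longleftrightarrow> c<x"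
        using realizes_elim[OF C(1)] by blast
      have LF: "L \<subseteq> F" and dc: "\<And>x y. x \<in> L \<Longrightarrow> y \<in> F \<Longrightarrow> y < x \<Longrightarrow> y \<in> L"
        using dL unfolding downcut_def by auto
      have cl: "\<And>x. x\<in>L \<Longrightarrow> x<c" using c(4) LF by (auto simp: Rcut_def)
      have cu: "\<And>x. x\<in>F \<Longrightarrow> x\<notin>L \<Longrightarrow> c<x" using c(5) by (auto simp: Rcut_def)
      have CX: "C \<subseteq> X" using c(1,3) Suc.prems by auto
      have IH: "\<forall>L. downcut C L \<longrightarrow> ?k \<le> card (gap X C L)" using Suc.IH[OF CX] C(2) by blast
      have d1: "downcut C L"
        unfolding downcut_def
      proof (intro conjI ballI impI)
        show "L \<subseteq> C" using LF c(3) by auto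
        fix x y assume "x \<in> L" "y \<in> C" "y < x"
        thus "y \<in> L" using c(3) cl dc by (metis insert_iff less_asym)
      qed
      have d2: "downcut C (insert c L)"
        unfolding downcut_def
      proof (intro conjI ballI impI)
        show "insert c L \<subseteq> C" using LF c(3) by auto
        fix x y assume x: "x \<in> insert c L" and y: "y \<in> C" and yx: "y < x"
        show "y \<in> insert c L"
        proof (cases "x = c")
          case True
          thus ?thesis using y yx c(3) cu by (metis insert_iff less_asym)
        next
          case False
          hence "x \<in> L" using x by simp
          thus ?thesis using y yx c(3) cl dc by (metis insert_iff less_asym less_trans)
        qed
      qed
      have g1: "gap X C L \<subseteq> {y\<in>gap X F L. y<c}" unfolding gap_def using c(2,3) LF by auto
      have g2: "gap X C (insert c L) \<subseteq> {y\<in>gap X F L. c<y}" unfolding gap_def using c(2,3) by auto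
      have cg: "c \<in> gap X F L" using c(1) cl cu unfolding gap_def by auto
      let ?A = "{y\<in>gap X F L. y<c}"
      let ?B = "{y\<in>gap X F L. c<y}"
      have fA: "finite ?A" "finite ?B" using gap_fin[OF fX] by auto
      have kA: "?k \<le> card ?A" using IH d1 g1 card_mono[OF fA(1) g1] by fastforce
      have kB: "?k \<le> card ?B" using IH d2 g2 card_mono[OF fA(2) g2] by fastforce
      have sub: "insert c (?A \<union> ?B) \<subseteq> gap X F L" using cg by auto
      have "card (insert c (?A \<union> ?B)) = Suc (card ?A + card ?B)"
        using fA by (subst card_insert_disjoint) (auto intro: card_Un_disjoint)
      hence "Suc (card ?A + card ?B) \<le> card (gap X F L)"
        using card_mono[OF gap_fin[OF fX] sub] by simp
      thus "2^Suc n - 1 \<le> card (gap X F L)" using k kA kB by linarith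
    qed
  next
    assume H: "\<forall>L. downcut F L \<longrightarrow> 2^Suc n - 1 \<le> card (gap X F L)"
    show "rk_ge X F (Suc n)"
      unfolding rk_ge.simps
    proof (intro allI impI)
      fix R assume R: "prime_ext F R"
      define L where "L = {x\<in>F. R (Some x) None}"
      have dL: "downcut F L" using prime_cut(1)[OF R] L_def by simp
      have RN: "\<And>x. x\<in>F \<Longrightarrow> R None (Some x) \<longleftrightarrow> \<not> R (Some x) None" using prime_cut(2)[OF R] .
      define G where "G = gap X F L"
      have fG: "finite G" using gap_fin[OF fX] G_def by simp
      have "2*?k+1 \<le> card G" using H dL k G_def by simp
      then obtain c where c: "c\<in>G" "?k \<le> card {y\<in>G. y<c}" "?k \<le> card {y\<in>G. c<y}"
        using median[OF fG] by blast
      have cX: "c\<in>X" and cl: "\<And>x. x\<in>L \<Longrightarrow> x<c" and cu: "\<And>x. x\<in>F \<Longrightarrow> x\<notin>L \<Longrightarrow> c<x"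
        using c(1) unfolding G_def gap_def by auto
      have cF: "c\<notin>F"
      proof
        assume "c \<in> F"
        thus False using cl cu by (cases "c \<in> L") auto
      qed
      have e1: "\<forall>x\<in>F. R (Some x) None \<longleftrightarrow> x<c"
      proof
        fix x assume x: "x \<in> F"
        show "R (Some x) None \<longleftrightarrow> x<c"
        proof (cases "x \<in> L")
          case True
          thus ?thesis using cl L_def by auto
        next
          case False
          thus ?thesis using cu[OF x] x L_def by auto
        qed
      qed
      have e2: "\<forall>x\<in>F. R None (Some x) \<longleftrightarrow> c<x"
      proof
        fix x assume x: "x \<in> F"
        hence "x \<noteq> c" using cF by auto
        thus "R None (Some x) \<longleftrightarrow> c<x" using RN[OF x] e1 x by auto
      qed
      have real: "realizes X F R (insert c F)" using realize_intro[OF R cX cF Suc.prems e1 e2] .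
      have CX: "insert c F \<subseteq> X" using cX Suc.prems by auto
      have "\<forall>L'. downcut (insert c F) L' \<longrightarrow> ?k \<le> card (gap X (insert c F) L')"
      proof (intro allI impI)
        fix L' assume dL': "downcut (insert c F) L'"
        define L0 where "L0 = L' \<inter> F"
        have L'sub: "L' \<subseteq> insert c F"
          and dc: "\<And>x y. x\<in>L' \<Longrightarrow> y\<in>insert c F \<Longrightarrow> y<x \<Longrightarrow> y\<in>L'"
          using dL' unfolding downcut_def by auto
        have dL0: "downcut F L0" using dL' unfolding downcut_def L0_def by auto
        have kk: "?k \<le> card (gap X F L0)" using H dL0 k by fastforce
        show "?k \<le> card (gap X (insert c F) L')"
        proof (cases "c \<in> L'")
          case False
          hence L'eq: "L' = L0" using L'sub L0_def by auto
          show ?thesis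
          proof (cases "L0 = L")
            case True
            have "{y\<in>G. y<c} \<subseteq> gap X (insert c F) L'"
              using L'eq True unfolding G_def gap_def by auto
            then show ?thesis using c(2) card_mono[OF gap_fin[OF fX]] order_trans by blast
          next
            case False2: False
            have "L0 \<subseteq> L"
            proof
              fix x assume x: "x \<in> L0"
              show "x \<in> L"
              proof (rule ccontr)
                assume "x \<notin> L"
                hence "c < x" using cu x L0_def by auto
                hence "c \<in> L'" using dc x L0_def by auto
                thus False using False by simp
              qed
            qed
            then obtain x where x: "x \<in> L" "x \<notin> L0" using False2 by auto
            have xF: "x \<in> F" using x dL unfolding downcut_def by auto
            have "gap X F L0 \<subseteq> gap X (insert c F) L'"
            proof
              fix y assume y: "y \<in> gap X F L0"
              have "y < x" using y x xF unfolding gap_def by auto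
              hence "y < c" using cl[OF x(1)] by simp
              thus "y \<in> gap X (insert c F) L'" using y L'eq False unfolding gap_def by auto
            qed
            then show ?thesis using kk card_mono[OF gap_fin[OF fX]] order_trans by blast
          qed
        next
          case True
          hence L'eq: "L' = insert c L0" using L'sub L0_def by auto
          show ?thesis
          proof (cases "L0 = L")
            case True
            have "{y\<in>G. c<y} \<subseteq> gap X (insert c F) L'"
              using L'eq True cF unfolding G_def gap_def by auto
            then show ?thesis using c(3) card_mono[OF gap_fin[OF fX]] order_trans by blast
          next
            case False2: False
            have "L \<subseteq> L0"
            proof
              fix x assume x: "x \<in> L"
              hence "x < c" "x \<in> F" using cl dL unfolding downcut_def by auto
              thus "x \<in> L0" using dc[OF True] L0_def by auto
            qed
            then obtain x where x: "x \<in> L0" "x \<notin> L" using False2 by auto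
            have xF: "x \<in> F" using x L0_def by auto
            have cx: "c < x" using cu[OF xF x(2)] .
            have "gap X F L0 \<subseteq> gap X (insert c F) L'"
            proof
              fix y assume y: "y \<in> gap X F L0"
              have "x < y" using y x unfolding gap_def by auto
              hence "c < y" using cx by simp
              thus "y \<in> gap X (insert c F) L'" using y L'eq cF unfolding gap_def by auto
            qed
            then show ?thesis using kk card_mono[OF gap_fin[OF fX]] order_trans by blast
          qed
        qed
      qed
      hence "rk_ge X (insert c F) n" using Suc.IH[OF CX] by blast
      thus "\<exists>C. realizes X F R C \<and> rk_ge X C n" using real by blast
    qed
  qed
qed

lemma rk_empty:
  fixes Y :: "'a::linorder set"
  assumes "finite Y"
  shows "rk_ge Y {} n \<longleftrightarrow> 2^n - 1 \<le> card Y"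
proof -
  have "downcut {} L \<longleftrightarrow> L = {}" for L :: "'a set" by (auto simp: downcut_def)
  moreover have "gap Y {} {} = Y" by (auto simp: gap_def)
  ultimately show ?thesis using main[OF assms, of "{}" n] by auto
qed

theorem theorem6p4:
  fixes Y :: "'a::linorder set"
  assumes "finite Y"
  shows "(\<forall>n::nat. rk_ge Y {} n \<longleftrightarrow> n \<le> nat \<lfloor>log 2 (real (card Y) + 1)\<rfloor>)
       \<and> (\<forall>n::nat. rk_ge Y {} n \<longleftrightarrow> card Y \<ge> 2 ^ n - 1)"
proof -
  have e: "2^n - 1 \<le> card Y \<longleftrightarrow> 2^n \<le> card Y + 1" for n :: nat
  proof -
    have "(1::nat) \<le> 2^n" by simp
    thus ?thesis by linarith
  qed
  show ?thesis using rk_empty[OF assms] logpart e by auto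
qed
end
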